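(* Let $M$ be a duplicial module in a pre-additive category. For all $n\ge0$, $$\pi_n=\kappa_n^n-b_{n+1}\kappa_{n+1}^n d_n .$$
   Context: Let $\mathcal A$ be a pre-additive category. Let $\Lambda_+$ be the category with objects $[n]$, $n\ge0$, where $\Lambda_+([m],[n])$ is the set of weakly monotone $f:\mathbb Z\to\mathbb Z$ with $f(j+m+1)=f(j)+n+1$ for all $j$ and $f(0)\ge0$. Define $\varepsilon^n_i:[n-1]\to[n]$ ($n\ge1$, $0\le i\le n$) by $\varepsilon^n_i(j)=j$ for $0\le j<i$, $j+1$ for $i\le j\le n-1$, and $\eta^n_i:[n+1]\to[n]$ ($0\le i\le n+1$) by $\eta^n_i(j)=j$ for $0\le j\le i$, $j-1$ for $i<j\le n+1$. A duplicial module is a functor $M:\Lambda_+^{op}\to\mathcal A$; $M_n=M([n])$, $\partial_{n,i}=M(\varepsilon^n_i):M_n\to M_{n-1}$, $s_{n,i}=M(\eta^n_i):M_n\to M_{n+1}$. Convention $M_{-1}=0$, maps into/out of it zero. Define $b_n=\sum_{i=0}^n(-1)^i\partial_{n,i}$ ($b_0=0$), $d_n=\sum_{i=0}^{n+1}(-1)^is_{n,i}$, the Karoubi operator $\kappa_n=(-1)^n(\partial_{n+1,0}s_{n,n+1}-s_{n-1,n}\partial_{n,0})$ (so $\kappa_0=\partial_{1,0}s_{0,1}$), and the Dwyer–Kan operator $\pi_n=(-1)^n\partial_{n+1,0}\kappa_{n+1}^n s_{n,n+1}:M_n\to M_n$. *)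

theory Defs
  imports Main
begin

record ('o, 'm) preadd_cat =
  Obj   :: "'o set"
  Hom   :: "'o \<Rightarrow> 'o \<Rightarrow> 'm set"
  comp  :: "'m \<Rightarrow> 'm \<Rightarrow> 'm"      (* comp g f = g after f *)
  ident :: "'o \<Rightarrow> 'm"
  zer   :: "'o \<Rightarrow> 'o \<Rightarrow> 'm"
  add   :: "'m \<Rightarrow> 'm \<Rightarrow> 'm"
  neg   :: "'m \<Rightarrow> 'm"

definition preadditive :: "('o, 'm) preadd_cat \<Rightarrow> bool" where
  "preadditive C \<longleftrightarrow>
     (\<forall>a b a' b'. a \<in> Obj C \<longrightarrow> b \<in> Obj C \<longrightarrow> a' \<in> Obj C \<longrightarrow> b' \<in> Obj C \<longrightarrow>
         Hom C a b \<inter> Hom C a' b' \<noteq> {} \<longrightarrow> a = a' \<and> b = b') \<and>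
     (\<forall>a. a \<in> Obj C \<longrightarrow> ident C a \<in> Hom C a a) \<and>
     (\<forall>a b c f g. a \<in> Obj C \<longrightarrow> b \<in> Obj C \<longrightarrow> c \<in> Obj C \<longrightarrow>
         f \<in> Hom C a b \<longrightarrow> g \<in> Hom C b c \<longrightarrow> comp C g f \<in> Hom C a c) \<and>
     (\<forall>a b c d f g h. a \<in> Obj C \<longrightarrow> b \<in> Obj C \<longrightarrow> c \<in> Obj C \<longrightarrow> d \<in> Obj C \<longrightarrow>
         f \<in> Hom C a b \<longrightarrow> g \<in> Hom C b c \<longrightarrow> h \<in> Hom C c d \<longrightarrow>
         comp C h (comp C g f) = comp C (comp C h g) f) \<and>
     (\<forall>a b f. a \<in> Obj C \<longrightarrow> b \<in> Obj C \<longrightarrow> f \<in> Hom C a b \<longrightarrow>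
         comp C (ident C b) f = f \<and> comp C f (ident C a) = f) \<and>
     (\<forall>a b. a \<in> Obj C \<longrightarrow> b \<in> Obj C \<longrightarrow>
         zer C a b \<in> Hom C a b \<and>
         (\<forall>f g. f \<in> Hom C a b \<longrightarrow> g \<in> Hom C a b \<longrightarrow> add C f g \<in> Hom C a b) \<and>
         (\<forall>f. f \<in> Hom C a b \<longrightarrow> neg C f \<in> Hom C a b) \<and>
         (\<forall>f g h. f \<in> Hom C a b \<longrightarrow> g \<in> Hom C a b \<longrightarrow> h \<in> Hom C a b \<longrightarrow>
             add C (add C f g) h = add C f (add C g h)) \<and>
         (\<forall>f g. f \<in> Hom C a b \<longrightarrow> g \<in> Hom C a b \<longrightarrow> add C f g = add C g f) \<and>
         (\<forall>f. f \<in> Hom C a b \<longrightarrow> add C (zer C a b) f = f) \<and>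
         (\<forall>f. f \<in> Hom C a b \<longrightarrow> add C (neg C f) f = zer C a b)) \<and>
     (\<forall>a b c f f' g. a \<in> Obj C \<longrightarrow> b \<in> Obj C \<longrightarrow> c \<in> Obj C \<longrightarrow>
         f \<in> Hom C a b \<longrightarrow> f' \<in> Hom C a b \<longrightarrow> g \<in> Hom C b c \<longrightarrow>
         comp C g (add C f f') = add C (comp C g f) (comp C g f')) \<and>
     (\<forall>a b c f g g'. a \<in> Obj C \<longrightarrow> b \<in> Obj C \<longrightarrow> c \<in> Obj C \<longrightarrow>
         f \<in> Hom C a b \<longrightarrow> g \<in> Hom C b c \<longrightarrow> g' \<in> Hom C b c \<longrightarrow>
         comp C (add C g g') f = add C (comp C g f) (comp C g' f))"

text \<open>Morphisms [m] -> [n]: weakly monotone f : int -> int with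
  f(j+m+1) = f(j)+n+1 and f(0) >= 0; composition is function composition.\<close>

definition lam_hom :: "nat \<Rightarrow> nat \<Rightarrow> (int \<Rightarrow> int) \<Rightarrow> bool" where
  "lam_hom m n f \<longleftrightarrow> mono f \<and> (\<forall>j. f (j + int m + 1) = f j + int n + 1) \<and> f 0 \<ge> 0"

definition per_ext :: "nat \<Rightarrow> nat \<Rightarrow> (int \<Rightarrow> int) \<Rightarrow> int \<Rightarrow> int" where
  "per_ext m n g j = g (j mod (int m + 1)) + (j div (int m + 1)) * (int n + 1)"

definition eps :: "nat \<Rightarrow> nat \<Rightarrow> int \<Rightarrow> int" where
  "eps n i = per_ext (n - 1) n (\<lambda>j. if j < int i then j else j + 1)"

definition eta :: "nat \<Rightarrow> nat \<Rightarrow> int \<Rightarrow> int" where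
  "eta n i = per_ext (n + 1) n (\<lambda>j. if j \<le> int i then j else j - 1)"

text \<open>A duplicial module is a functor Lambda_+^op -> C: objects M n, and
  Mm m n f = M(f) : M n -> M m for f : [m] -> [n].\<close>

definition duplicial :: "('o, 'm) preadd_cat \<Rightarrow> (nat \<Rightarrow> 'o) \<Rightarrow>
    (nat \<Rightarrow> nat \<Rightarrow> (int \<Rightarrow> int) \<Rightarrow> 'm) \<Rightarrow> bool" where
  "duplicial C M Mm \<longleftrightarrow>
     (\<forall>n. M n \<in> Obj C) \<and>
     (\<forall>m n f. lam_hom m n f \<longrightarrow> Mm m n f \<in> Hom C (M n) (M m)) \<and>
     (\<forall>n. Mm n n id = ident C (M n)) \<and>
     (\<forall>l m n f g. lam_hom l m f \<longrightarrow> lam_hom m n g \<longrightarrow>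
         Mm l n (g \<circ> f) = comp C (Mm l m f) (Mm m n g))"

definition face where "face C M Mm n i = Mm (n - 1) n (eps n i)"
definition degen where "degen C M Mm n i = Mm (n + 1) n (eta n i)"

definition sgnm :: "('o, 'm) preadd_cat \<Rightarrow> nat \<Rightarrow> 'm \<Rightarrow> 'm" where
  "sgnm C i x = (if even i then x else neg C x)"

fun hsum :: "('o, 'm) preadd_cat \<Rightarrow> 'o \<Rightarrow> 'o \<Rightarrow> (nat \<Rightarrow> 'm) \<Rightarrow> nat \<Rightarrow> 'm" where
  "hsum C a b f 0 = zer C a b"
| "hsum C a b f (Suc k) = add C (hsum C a b f k) (f k)"

fun mpow :: "('o, 'm) preadd_cat \<Rightarrow> 'o \<Rightarrow> 'm \<Rightarrow> nat \<Rightarrow> 'm" where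
  "mpow C a f 0 = ident C a"
| "mpow C a f (Suc k) = comp C f (mpow C a f k)"

text \<open>b_n = sum_{i=0}^n (-1)^i \<partial>_{n,i} : M_n -> M_{n-1} (used for n >= 1).\<close>
definition bdry where
  "bdry C M Mm n = hsum C (M n) (M (n - 1)) (\<lambda>i. sgnm C i (face C M Mm n i)) (Suc n)"

definition dcob where
  "dcob C M Mm n = hsum C (M n) (M (n + 1)) (\<lambda>i. sgnm C i (degen C M Mm n i)) (Suc (Suc n))"

text \<open>Karoubi operator; the term through M_{-1} = 0 vanishes for n = 0.\<close>
definition karoubi where
  "karoubi C M Mm n = sgnm C n
     (if n = 0 then comp C (face C M Mm 1 0) (degen C M Mm 0 1)
      else add C (comp C (face C M Mm (n + 1) 0) (degen C M Mm n (n + 1)))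
                 (neg C (comp C (degen C M Mm (n - 1) n) (face C M Mm n 0))))"

definition dwyer_kan where
  "dwyer_kan C M Mm n = sgnm C n
     (comp C (face C M Mm (n + 1) 0)
        (comp C (mpow C (M (n + 1)) (karoubi C M Mm (n + 1)) n) (degen C M Mm n (n + 1))))"

end

theory Submission
  imports Defs
begin


lemma per_ext_period: "per_ext m n h (j + int m + 1) = per_ext m n h j + int n + 1"
proof -
  have a: "(j + int m + 1) mod (int m + 1) = j mod (int m + 1)"
    by (metis add.assoc mod_add_self2)
  have b: "(j + int m + 1) div (int m + 1) = j div (int m + 1) + 1"
    by (metis add.assoc div_add_self2 add_nonneg_nonneg of_nat_0_le_iff zero_less_one
        add_nonneg_pos less_irrefl)
  show ?thesis unfolding per_ext_def a b by (simp add: algebra_simps)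
qed

lemma lam_hom_per_ext:
  assumes mo: "\<And>x y. 0 \<le> x \<Longrightarrow> x \<le> y \<Longrightarrow> y \<le> int m \<Longrightarrow> h x \<le> h y"
    and top: "h (int m) \<le> h 0 + int n + 1" and h0: "0 \<le> h 0"
  shows "lam_hom m n (per_ext m n h)"
  unfolding lam_hom_def
proof (intro conjI allI)
  show "mono (per_ext m n h)"
  proof (rule monoI)
    fix x y :: int assume xy: "x \<le> y"
    define p where "p = int m + 1"
    have p0: "p > 0" unfolding p_def by simp
    define q1 where "q1 = x div p" define r1 where "r1 = x mod p"
    define q2 where "q2 = y div p" define r2 where "r2 = y mod p"
    have r1: "0 \<le> r1" "r1 \<le> int m" using pos_mod_bound[OF p0, of x] pos_mod_sign[OF p0, of x] unfolding r1_def p_def by auto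
    have r2: "0 \<le> r2" "r2 \<le> int m" using pos_mod_bound[OF p0, of y] pos_mod_sign[OF p0, of y] unfolding r2_def p_def by auto
    have x: "x = q1 * p + r1" and y: "y = q2 * p + r2" unfolding q1_def r1_def q2_def r2_def by simp_all
    have q: "q1 \<le> q2" unfolding q1_def q2_def using xy p0 by (simp add: zdiv_mono1)
    have px: "per_ext m n h x = h r1 + q1 * (int n + 1)" unfolding per_ext_def r1_def q1_def p_def by simp
    have py: "per_ext m n h y = h r2 + q2 * (int n + 1)" unfolding per_ext_def r2_def q2_def p_def by simp
    show "per_ext m n h x \<le> per_ext m n h y"
    proof (cases "q1 = q2")
      case True
      then have "r1 \<le> r2" using x y xy by simp
      then show ?thesis using px py True mo r1 r2 by simp
    next
      case False
      then have "q1 + 1 \<le> q2" using q by simp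
      then have "(q1 + 1) * (int n + 1) \<le> q2 * (int n + 1)" by (rule mult_right_mono) simp
      moreover have "h r1 \<le> h (int m)" using mo r1 by simp
      moreover have "h 0 \<le> h r2" using mo r2 by simp
      ultimately show ?thesis using px py top by (simp add: algebra_simps)
    qed
  qed
  fix j show "per_ext m n h (j + int m + 1) = per_ext m n h j + int n + 1" by (rule per_ext_period)
next
  show "0 \<le> per_ext m n h 0" unfolding per_ext_def using h0 by simp
qed

lemma lam_shift_nat:
  assumes "lam_hom a n f"
  shows "f (j + int k * (int a + 1)) = f j + int k * (int n + 1)"
proof (induction k arbitrary: j)
  case 0 then show ?case by simp
next
  case (Suc k)
  have "f (j + int (Suc k) * (int a + 1)) = f ((j + int k * (int a + 1)) + int a + 1)"
    by (simp add: algebra_simps)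
  also have "\<dots> = f (j + int k * (int a + 1)) + int n + 1"
    using assms unfolding lam_hom_def by blast
  finally show ?case using Suc by (simp add: algebra_simps)
qed

lemma lam_shift:
  assumes "lam_hom a n f"
  shows "f (j + k * (int a + 1)) = f j + k * (int n + 1)"
proof (cases "k \<ge> 0")
  case True
  then obtain k' where "k = int k'" by (metis nonneg_eq_int)
  then show ?thesis using lam_shift_nat[OF assms] by simp
next
  case False
  then obtain k' where k: "k = - int k'" by (metis nonneg_eq_int neg_0_le_iff_le le_cases minus_minus)
  have "f ((j + k * (int a + 1)) + int k' * (int a + 1)) = f (j + k * (int a + 1)) + int k' * (int n + 1)"
    by (rule lam_shift_nat[OF assms])
  then show ?thesis using k by (simp add: algebra_simps)
qed

lemma lam_eq:
  assumes "lam_hom a n f" "lam_hom a n g"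
    and eq: "\<And>j. 0 \<le> j \<Longrightarrow> j \<le> int a \<Longrightarrow> f j = g j"
  shows "f = g"
proof
  fix x
  define p where "p = int a + 1"
  have x: "x = x mod p + (x div p) * p" using mod_div_mult_eq[of x p] by simp
  have p0: "p > 0" unfolding p_def by simp
  have r: "0 \<le> x mod p" "x mod p \<le> int a" using pos_mod_bound[OF p0, of x] pos_mod_sign[OF p0, of x] unfolding p_def by auto
  have "f x = f (x mod p) + (x div p) * (int n + 1)"
    by (subst x, unfold p_def, rule lam_shift[OF assms(1)])
  moreover have "g x = g (x mod p) + (x div p) * (int n + 1)"
    by (subst x, unfold p_def, rule lam_shift[OF assms(2)])
  ultimately show "f x = g x" using eq r by simp
qed

lemma lam_hom_comp: "lam_hom l m f \<Longrightarrow> lam_hom m n g \<Longrightarrow> lam_hom l n (g \<circ> f)"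
  unfolding lam_hom_def mono_def
  by (auto intro: order_trans)

lemma lam_hom_id: "lam_hom n n id"
  unfolding lam_hom_def by (simp add: mono_def)

lemma lam_hom_eps: "1 \<le> n \<Longrightarrow> lam_hom (n - 1) n (eps n i)"
  unfolding eps_def by (rule lam_hom_per_ext) auto

lemma lam_hom_eps': "lam_hom m (Suc m) (eps (Suc m) i)"
  using lam_hom_eps[of "Suc m" i] by simp

lemma lam_hom_eta: "lam_hom (Suc n) n (eta n i)"
  unfolding eta_def Suc_eq_plus1 by (rule lam_hom_per_ext) auto

lemma per_ext_eval:
  assumes "0 \<le> x" "x \<le> 2 * int m + 1"
  shows "per_ext m n h x = (if x \<le> int m then h x else h (x - int m - 1) + int n + 1)"
proof (cases "x \<le> int m")
  case True
  then show ?thesis using assms unfolding per_ext_def by simp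
next
  case False
  have "per_ext m n h ((x - int m - 1) + int m + 1) = per_ext m n h (x - int m - 1) + int n + 1"
    by (rule per_ext_period)
  moreover have "per_ext m n h (x - int m - 1) = h (x - int m - 1)"
    using assms False unfolding per_ext_def by simp
  ultimately show ?thesis using False by simp
qed

lemma eps_eval:
  "0 \<le> j \<Longrightarrow> j \<le> 2 * int n - 1 \<Longrightarrow> 1 \<le> n \<Longrightarrow> eps n i j =
    (if j < int n then (if j < int i then j else j + 1)
     else (if j - int n < int i then j - int n else j - int n + 1) + int n + 1)"
  unfolding eps_def by (subst per_ext_eval) auto

lemma eta_eval:
  "0 \<le> j \<Longrightarrow> j \<le> 2 * int n + 3 \<Longrightarrow> eta n i j =
    (if j \<le> int n + 1 then (if j \<le> int i then j else j - 1)
     else (if j - int n - 2 \<le> int i then j - int n - 2 else j - int n - 3) + int n + 1)"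
  unfolding eta_def by (subst per_ext_eval) auto

lemma I1: "eta m 0 \<circ> eps (Suc m) 0 = id"
  by (rule lam_eq[of m m]) (auto intro!: lam_hom_comp lam_hom_eps' lam_hom_eta lam_hom_id simp: eps_eval eta_eval)

lemmas lamI = lam_hom_comp lam_hom_eps' lam_hom_eta lam_hom_id

lemma I2: "eta m 0 \<circ> eps (Suc m) 1 = id"
  by (rule lam_eq[of m m]) (auto intro!: lamI simp: eps_eval eta_eval)

lemma I3: "2 \<le> i \<Longrightarrow> i \<le> Suc (Suc k) \<Longrightarrow>
  eta (Suc k) 0 \<circ> eps (Suc (Suc k)) i = eps (Suc k) (i - 1) \<circ> eta k 0"
  by (rule lam_eq[of "Suc k" "Suc k"]) (auto intro!: lamI simp: eps_eval eta_eval)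

lemma I4: "eta m (Suc m) \<circ> eps (Suc m) (Suc m) = id"
  by (rule lam_eq[of m m]) (auto intro!: lamI simp: eps_eval eta_eval)

lemma I5: "eta m 0 \<circ> eta (Suc m) (Suc (Suc m)) \<circ> eps (Suc (Suc m)) 0 = eta m (Suc m)"
  by (rule lam_eq[of "Suc m" m]) (auto intro!: lamI simp: eps_eval eta_eval)

lemma I6: "1 \<le> j \<Longrightarrow> j \<le> m \<Longrightarrow>
  eta m j \<circ> eta (Suc m) (Suc (Suc m)) \<circ> eps (Suc (Suc m)) 0 = eta m (Suc m) \<circ> eps (Suc m) 0 \<circ> eta m (j - 1)"
  by (rule lam_eq[of "Suc m" m]) (auto intro!: lamI simp: eps_eval eta_eval)

lemma I7: "1 \<le> j \<Longrightarrow> j \<le> Suc k \<Longrightarrow>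
  eta (Suc k) j \<circ> eps (Suc (Suc k)) 0 \<circ> eta (Suc k) (Suc (Suc k)) = eps (Suc k) 0 \<circ> eta k (Suc k) \<circ> eta (Suc k) (j - 1)"
  by (rule lam_eq[of "Suc (Suc k)" "Suc k"]) (auto intro!: lamI simp: eps_eval eta_eval)

lemma I8: "1 \<le> i \<Longrightarrow> i \<le> m \<Longrightarrow>
  eta (Suc m) (Suc (Suc m)) \<circ> eps (Suc (Suc m)) 0 \<circ> eps (Suc m) i = eps (Suc m) (Suc i) \<circ> eta m (Suc m) \<circ> eps (Suc m) 0"
  by (rule lam_eq[of m "Suc m"]) (auto intro!: lamI simp: eps_eval eta_eval)

lemma I9: "1 \<le> i \<Longrightarrow> i \<le> Suc k \<Longrightarrow>
  eps (Suc (Suc k)) 0 \<circ> eta (Suc k) (Suc (Suc k)) \<circ> eps (Suc (Suc k)) i = eps (Suc (Suc k)) (Suc i) \<circ> eps (Suc k) 0 \<circ> eta k (Suc k)"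
  by (rule lam_eq[of "Suc k" "Suc (Suc k)"]) (auto intro!: lamI simp: eps_eval eta_eval)

lemma I10: "eta (Suc m) (Suc (Suc m)) \<circ> eps (Suc (Suc m)) 0 \<circ> eps (Suc m) (Suc m) = eps (Suc m) 0 \<circ> eta m (Suc m) \<circ> eps (Suc m) (Suc m)"
  by (rule lam_eq[of m "Suc m"]) (auto intro!: lamI simp: eps_eval eta_eval)



locale dupl =
  fixes C :: "('o, 'm) preadd_cat" and M :: "nat \<Rightarrow> 'o"
    and Mm :: "nat \<Rightarrow> nat \<Rightarrow> (int \<Rightarrow> int) \<Rightarrow> 'm"
  assumes P: "preadditive C" and D: "duplicial C M Mm"
begin

lemmas PP = P[unfolded preadditive_def]
lemmas P_id = PP[THEN conjunct2, THEN conjunct1]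
lemmas P_comp = PP[THEN conjunct2, THEN conjunct2, THEN conjunct1]
lemmas P_assoc = PP[THEN conjunct2, THEN conjunct2, THEN conjunct2, THEN conjunct1]
lemmas P_unit = PP[THEN conjunct2, THEN conjunct2, THEN conjunct2, THEN conjunct2, THEN conjunct1]
lemmas P_ab = PP[THEN conjunct2, THEN conjunct2, THEN conjunct2, THEN conjunct2, THEN conjunct2, THEN conjunct1]
lemmas P_dl = PP[THEN conjunct2, THEN conjunct2, THEN conjunct2, THEN conjunct2, THEN conjunct2, THEN conjunct2, THEN conjunct1]
lemmas P_dr = PP[THEN conjunct2, THEN conjunct2, THEN conjunct2, THEN conjunct2, THEN conjunct2, THEN conjunct2, THEN conjunct2]
lemmas DD = D[unfolded duplicial_def]

lemma M_obj[simp]: "M n \<in> Obj C" using DD[THEN conjunct1] by blast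

abbreviation "cmp \<equiv> comp C"
abbreviation "ad \<equiv> add C"
abbreviation "ng \<equiv> neg C"
abbreviation "zr \<equiv> zer C"

lemma comp_cl: "a \<in> Obj C \<Longrightarrow> b \<in> Obj C \<Longrightarrow> c \<in> Obj C \<Longrightarrow> f \<in> Hom C a b \<Longrightarrow> g \<in> Hom C b c \<Longrightarrow> cmp g f \<in> Hom C a c"
  by (rule P_comp[rule_format])
lemma assoc: "a \<in> Obj C \<Longrightarrow> b \<in> Obj C \<Longrightarrow> c \<in> Obj C \<Longrightarrow> d \<in> Obj C \<Longrightarrow>
   f \<in> Hom C a b \<Longrightarrow> g \<in> Hom C b c \<Longrightarrow> h \<in> Hom C c d \<Longrightarrow> cmp h (cmp g f) = cmp (cmp h g) f"
  by (rule P_assoc[rule_format])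
lemma id_cl: "a \<in> Obj C \<Longrightarrow> ident C a \<in> Hom C a a" by (rule P_id[rule_format])
lemma id_lr: "a \<in> Obj C \<Longrightarrow> b \<in> Obj C \<Longrightarrow> f \<in> Hom C a b \<Longrightarrow> cmp (ident C b) f = f \<and> cmp f (ident C a) = f"
  by (rule P_unit[rule_format])
lemmas id_l = id_lr[THEN conjunct1] and id_r = id_lr[THEN conjunct2]
lemmas ab_all = P_ab[rule_format]
lemmas zr_cl = ab_all[THEN conjunct1]
lemmas ad_cl = ab_all[THEN conjunct2, THEN conjunct1, rule_format]
lemmas ng_cl = ab_all[THEN conjunct2, THEN conjunct2, THEN conjunct1, rule_format]
lemmas ad_assoc = ab_all[THEN conjunct2, THEN conjunct2, THEN conjunct2, THEN conjunct1, rule_format]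
lemmas ad_comm = ab_all[THEN conjunct2, THEN conjunct2, THEN conjunct2, THEN conjunct2, THEN conjunct1, rule_format]
lemmas zr_l = ab_all[THEN conjunct2, THEN conjunct2, THEN conjunct2, THEN conjunct2, THEN conjunct2, THEN conjunct1, rule_format]
lemmas ng_l = ab_all[THEN conjunct2, THEN conjunct2, THEN conjunct2, THEN conjunct2, THEN conjunct2, THEN conjunct2, rule_format]
lemma dl: "a \<in> Obj C \<Longrightarrow> b \<in> Obj C \<Longrightarrow> c \<in> Obj C \<Longrightarrow> f \<in> Hom C a b \<Longrightarrow> f' \<in> Hom C a b \<Longrightarrow> g \<in> Hom C b c \<Longrightarrow>
  cmp g (ad f f') = ad (cmp g f) (cmp g f')" by (rule P_dl[rule_format])
lemma dr: "a \<in> Obj C \<Longrightarrow> b \<in> Obj C \<Longrightarrow> c \<in> Obj C \<Longrightarrow> f \<in> Hom C a b \<Longrightarrow> g \<in> Hom C b c \<Longrightarrow> g' \<in> Hom C b c \<Longrightarrow>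
  cmp (ad g g') f = ad (cmp g f) (cmp g' f)" by (rule P_dr[rule_format])
thm zr_cl ad_cl ng_cl ad_assoc ad_comm zr_l ng_l

lemma zr_r: "a \<in> Obj C \<Longrightarrow> b \<in> Obj C \<Longrightarrow> f \<in> Hom C a b \<Longrightarrow> ad f (zr a b) = f"
  by (metis ad_comm zr_cl zr_l)
lemma ng_r: "a \<in> Obj C \<Longrightarrow> b \<in> Obj C \<Longrightarrow> f \<in> Hom C a b \<Longrightarrow> ad f (ng f) = zr a b"
  by (metis ad_comm ng_cl ng_l)
lemma ng_unique: assumes "a \<in> Obj C" "b \<in> Obj C" "f \<in> Hom C a b" "g \<in> Hom C a b" "ad f g = zr a b"
  shows "f = ng g"
proof -
  have "f = ad f (ad g (ng g))" using assms by (simp add: ng_r zr_r ng_cl)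
  also have "\<dots> = ad (ad f g) (ng g)" using assms by (metis ad_assoc ng_cl)
  also have "\<dots> = ng g" using assms by (simp add: zr_l ng_cl)
  finally show ?thesis .
qed
lemma ng_ng: "a \<in> Obj C \<Longrightarrow> b \<in> Obj C \<Longrightarrow> f \<in> Hom C a b \<Longrightarrow> ng (ng f) = f"
  by (metis ng_unique ng_cl ng_r)
lemma ng_zr: "a \<in> Obj C \<Longrightarrow> b \<in> Obj C \<Longrightarrow> ng (zr a b) = zr a b"
  by (metis ng_unique zr_cl zr_l)
lemma ng_ad: assumes "a \<in> Obj C" "b \<in> Obj C" "f \<in> Hom C a b" "g \<in> Hom C a b"
  shows "ng (ad f g) = ad (ng f) (ng g)"
proof -
  have "ad (ad (ng f) (ng g)) (ad f g) = ad (ng f) (ad (ng g) (ad g f))"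
    using assms by (simp add: ad_assoc ad_cl ng_cl ad_comm[of a b f g])
  also have "\<dots> = ad (ng f) (ad (ad (ng g) g) f)"
    using assms by (simp add: ad_assoc ad_cl ng_cl)
  also have "\<dots> = zr a b" using assms by (simp add: ng_l zr_l)
  finally show ?thesis using assms by (metis ng_unique ad_cl ng_cl)
qed
lemma cancel_self: assumes "a \<in> Obj C" "b \<in> Obj C" "x \<in> Hom C a b" "ad x x = x" shows "x = zr a b"
proof -
  have "zr a b = ad (ng x) (ad x x)" using assms by (simp add: ng_l)
  also have "\<dots> = ad (ad (ng x) x) x" using assms by (metis ad_assoc ng_cl)
  also have "\<dots> = x" using assms by (simp add: ng_l zr_l)
  finally show ?thesis by simp
qed
lemma comp_zr_r: "a \<in> Obj C \<Longrightarrow> b \<in> Obj C \<Longrightarrow> c \<in> Obj C \<Longrightarrow> g \<in> Hom C b c \<Longrightarrow> cmp g (zr a b) = zr a c"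
  by (rule cancel_self) (auto simp: comp_cl zr_cl dl[symmetric] zr_l)
lemma comp_zr_l: "a \<in> Obj C \<Longrightarrow> b \<in> Obj C \<Longrightarrow> c \<in> Obj C \<Longrightarrow> f \<in> Hom C a b \<Longrightarrow> cmp (zr b c) f = zr a c"
  by (rule cancel_self) (auto simp: comp_cl zr_cl dr[symmetric] zr_l)
lemma comp_ng_r: assumes "a \<in> Obj C" "b \<in> Obj C" "c \<in> Obj C" "f \<in> Hom C a b" "g \<in> Hom C b c"
  shows "cmp g (ng f) = ng (cmp g f)"
proof (rule ng_unique[of a c])
  show "ad (cmp g (ng f)) (cmp g f) = zr a c"
    using assms by (simp add: dl[symmetric] ng_cl ng_l comp_zr_r)
qed (use assms in \<open>auto simp: comp_cl ng_cl\<close>)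
lemma comp_ng_l: assumes "a \<in> Obj C" "b \<in> Obj C" "c \<in> Obj C" "f \<in> Hom C a b" "g \<in> Hom C b c"
  shows "cmp (ng g) f = ng (cmp g f)"
proof (rule ng_unique[of a c])
  show "ad (cmp (ng g) f) (cmp g f) = zr a c"
    using assms by (simp add: dr[symmetric] ng_cl ng_l comp_zr_l)
qed (use assms in \<open>auto simp: comp_cl ng_cl\<close>)

abbreviation H :: "nat \<Rightarrow> nat \<Rightarrow> 'm set" where "H a b \<equiv> Hom C (M a) (M b)"

lemma Mm_hom: "lam_hom a b f \<Longrightarrow> Mm a b f \<in> H b a"
  using DD[THEN conjunct2, THEN conjunct1] by blast
lemma Mm_id: "Mm n n id = ident C (M n)"
  using DD[THEN conjunct2, THEN conjunct2, THEN conjunct1] by blast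
lemma Mm_comp: "lam_hom a b f \<Longrightarrow> lam_hom b c g \<Longrightarrow> cmp (Mm a b f) (Mm b c g) = Mm a c (g \<circ> f)"
  using DD[THEN conjunct2, THEN conjunct2, THEN conjunct2] by metis
lemma Mm3l: "lam_hom a b f \<Longrightarrow> lam_hom b c g \<Longrightarrow> lam_hom c d h \<Longrightarrow>
   cmp (cmp (Mm a b f) (Mm b c g)) (Mm c d h) = Mm a d (h \<circ> g \<circ> f)"
  by (simp add: Mm_comp lam_hom_comp o_assoc)
lemma Mm3r: "lam_hom a b f \<Longrightarrow> lam_hom b c g \<Longrightarrow> lam_hom c d h \<Longrightarrow>
   cmp (Mm a b f) (cmp (Mm b c g) (Mm c d h)) = Mm a d (h \<circ> g \<circ> f)"
  by (simp add: Mm_comp lam_hom_comp o_assoc)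

lemma F_eq: "face C M Mm (Suc n) i = Mm n (Suc n) (eps (Suc n) i)" by (simp add: face_def)
lemma S_eq: "degen C M Mm n i = Mm (Suc n) n (eta n i)" by (simp add: degen_def)
lemma F_hom[simp]: "face C M Mm (Suc n) i \<in> H (Suc n) n"
  by (simp add: F_eq Mm_hom lam_hom_eps')
lemma S_hom[simp]: "degen C M Mm n i \<in> H n (Suc n)"
  by (simp add: S_eq Mm_hom lam_hom_eta)

lemma sgnm_cl: "a \<in> Obj C \<Longrightarrow> b \<in> Obj C \<Longrightarrow> x \<in> Hom C a b \<Longrightarrow> sgnm C i x \<in> Hom C a b"
  by (simp add: sgnm_def ng_cl)
lemma sgnm_Suc: "a \<in> Obj C \<Longrightarrow> b \<in> Obj C \<Longrightarrow> x \<in> Hom C a b \<Longrightarrow> sgnm C (Suc i) x = ng (sgnm C i x)"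
  by (simp add: sgnm_def ng_ng)
lemma sgnm_zr: "a \<in> Obj C \<Longrightarrow> b \<in> Obj C \<Longrightarrow> sgnm C i (zr a b) = zr a b"
  by (simp add: sgnm_def ng_zr)
lemma sgnm_comp_l: "a \<in> Obj C \<Longrightarrow> b \<in> Obj C \<Longrightarrow> c \<in> Obj C \<Longrightarrow> f \<in> Hom C a b \<Longrightarrow> g \<in> Hom C b c \<Longrightarrow>
  cmp (sgnm C i g) f = sgnm C i (cmp g f)"
  by (simp add: sgnm_def comp_ng_l)
lemma sgnm_comp_r: "a \<in> Obj C \<Longrightarrow> b \<in> Obj C \<Longrightarrow> c \<in> Obj C \<Longrightarrow> f \<in> Hom C a b \<Longrightarrow> g \<in> Hom C b c \<Longrightarrow>
  cmp g (sgnm C i f) = sgnm C i (cmp g f)"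
  by (simp add: sgnm_def comp_ng_r)

lemma K_hom[simp]: "karoubi C M Mm n \<in> H n n"
proof (cases n)
  case 0
  then show ?thesis unfolding karoubi_def
    using comp_cl[of "M 0" "M 1" "M 0" "degen C M Mm 0 1" "face C M Mm 1 0"]
    by (simp add: sgnm_def)
next
  case (Suc m)
  have a: "cmp (face C M Mm (Suc (Suc m)) 0) (degen C M Mm (Suc m) (Suc (Suc m))) \<in> H (Suc m) (Suc m)"
    by (rule comp_cl[of _ "M (Suc (Suc m))"]) auto
  have b: "cmp (degen C M Mm m (Suc m)) (face C M Mm (Suc m) 0) \<in> H (Suc m) (Suc m)"
    by (rule comp_cl[of _ "M m"]) auto
  show ?thesis unfolding karoubi_def using Suc a b by (simp add: sgnm_cl ad_cl ng_cl)
qed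

lemma mpow_hom: "x \<in> H n n \<Longrightarrow> mpow C (M n) x p \<in> H n n"
  by (induction p) (auto simp: id_cl comp_cl[of "M n" "M n" "M n"])

lemma hsum_cl: "a \<in> Obj C \<Longrightarrow> b \<in> Obj C \<Longrightarrow> (\<And>i. i < k \<Longrightarrow> f i \<in> Hom C a b) \<Longrightarrow> hsum C a b f k \<in> Hom C a b"
  by (induction k) (auto simp: zr_cl ad_cl)

lemma bdry_hom[simp]: "bdry C M Mm (Suc n) \<in> H (Suc n) n"
  unfolding bdry_def diff_Suc_1 by (rule hsum_cl) (auto simp: sgnm_cl)
lemma dcob_hom[simp]: "dcob C M Mm n \<in> H n (Suc n)"
  unfolding dcob_def Suc_eq_plus1[symmetric] by (rule hsum_cl) (auto simp: sgnm_cl)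

lemma comp_hsum_l: "a \<in> Obj C \<Longrightarrow> b \<in> Obj C \<Longrightarrow> c \<in> Obj C \<Longrightarrow> (\<And>i. i < k \<Longrightarrow> f i \<in> Hom C a b) \<Longrightarrow> g \<in> Hom C b c \<Longrightarrow>
  cmp g (hsum C a b f k) = hsum C a c (\<lambda>i. cmp g (f i)) k"
  by (induction k) (auto simp: comp_zr_r dl hsum_cl)
lemma comp_hsum_r: "a \<in> Obj C \<Longrightarrow> b \<in> Obj C \<Longrightarrow> c \<in> Obj C \<Longrightarrow> (\<And>i. i < k \<Longrightarrow> f i \<in> Hom C b c) \<Longrightarrow> g \<in> Hom C a b \<Longrightarrow>
  cmp (hsum C b c f k) g = hsum C a c (\<lambda>i. cmp (f i) g) k"
  by (induction k) (auto simp: comp_zr_l dr hsum_cl)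
lemma hsum_cong: "(\<And>i. i < k \<Longrightarrow> f i = g i) \<Longrightarrow> hsum C a b f k = hsum C a b g k"
  by (induction k) auto
lemma hsum_prefix_zero: "a \<in> Obj C \<Longrightarrow> b \<in> Obj C \<Longrightarrow> (\<And>i. i < k \<Longrightarrow> f i = zr a b) \<Longrightarrow> hsum C a b f k = zr a b"
  by (induction k) (auto simp: zr_l zr_cl)
lemma hsum_two_last: "a \<in> Obj C \<Longrightarrow> b \<in> Obj C \<Longrightarrow> (\<And>i. i < k \<Longrightarrow> f i = zr a b) \<Longrightarrow>
   f k \<in> Hom C a b \<Longrightarrow> hsum C a b f (Suc (Suc k)) = ad (f k) (f (Suc k))"
  by (simp add: hsum_prefix_zero zr_l)
lemma hsum_two_first: "a \<in> Obj C \<Longrightarrow> b \<in> Obj C \<Longrightarrow> (\<And>i. 2 \<le> i \<Longrightarrow> i < Suc (Suc k) \<Longrightarrow> f i = zr a b) \<Longrightarrow>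
   f 0 \<in> Hom C a b \<Longrightarrow> f 1 \<in> Hom C a b \<Longrightarrow> hsum C a b f (Suc (Suc k)) = ad (f 0) (f 1)"
proof (induction k)
  case 0
  then show ?case by (simp add: zr_l)
next
  case (Suc k)
  have "hsum C a b f (Suc (Suc (Suc k))) = ad (hsum C a b f (Suc (Suc k))) (f (Suc (Suc k)))" by simp
  also have "\<dots> = ad (ad (f 0) (f 1)) (zr a b)" using Suc by simp
  also have "\<dots> = ad (f 0) (f 1)" using Suc by (simp add: zr_r ad_cl)
  finally show ?case .
qed

abbreviation "F \<equiv> face C M Mm"
abbreviation "S \<equiv> degen C M Mm"
abbreviation "K \<equiv> karoubi C M Mm"

lemma K_Suc: "K (Suc m) = sgnm C (Suc m) (ad (cmp (F (Suc (Suc m)) 0) (S (Suc m) (Suc (Suc m))))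
     (ng (cmp (S m (Suc m)) (F (Suc m) 0))))"
  by (simp add: karoubi_def)

lemma FS_hom[simp]: "cmp (F (Suc n) i) (S n j) \<in> H n n"
  by (rule comp_cl[of _ "M (Suc n)"]) auto
lemma SF_hom[simp]: "cmp (S n j) (F (Suc n) i) \<in> H (Suc n) (Suc n)"
  by (rule comp_cl[of _ "M n"]) auto

lemma expr_r: "X \<in> H a b \<Longrightarrow> Y \<in> H a b \<Longrightarrow> Z \<in> H c a \<Longrightarrow>
  cmp (sgnm C i (ad X (ng Y))) Z = sgnm C i (ad (cmp X Z) (ng (cmp Y Z)))"
  by (simp add: sgnm_comp_l[of "M c" "M a" "M b"] ad_cl ng_cl dr[of "M c" "M a" "M b"] comp_ng_l[of "M c" "M a" "M b"])
lemma expr_l: "X \<in> H a b \<Longrightarrow> Y \<in> H a b \<Longrightarrow> Z \<in> H b c \<Longrightarrow>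
  cmp Z (sgnm C i (ad X (ng Y))) = sgnm C i (ad (cmp Z X) (ng (cmp Z Y)))"
  by (simp add: sgnm_comp_r[of "M a" "M b" "M c"] ad_cl ng_cl dl[of "M a" "M b" "M c"] comp_ng_r[of "M a" "M b" "M c"])

lemmas Msimps = F_eq S_eq Mm3l Mm3r lam_hom_eps' lam_hom_eta

lemma L1: "cmp (K (Suc m)) (S m 0) = zr (M m) (M (Suc m))"
proof -
  have e1: "cmp (cmp (F (Suc (Suc m)) 0) (S (Suc m) (Suc (Suc m)))) (S m 0) = S m (Suc m)"
    by (simp add: Msimps I5)
  have e2: "cmp (cmp (S m (Suc m)) (F (Suc m) 0)) (S m 0) = S m (Suc m)"
    by (simp add: Msimps I1)
  show ?thesis unfolding K_Suc
    by (simp add: expr_r[where a="Suc m" and b="Suc m" and c=m] e1 e2 ng_r[of "M m" "M (Suc m)"] sgnm_zr[of "M m" "M (Suc m)"])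
qed

lemma L2: assumes "1 \<le> j" "j \<le> m"
  shows "cmp (K (Suc m)) (S m j) = ng (cmp (S m (j - 1)) (K m))"
proof -
  obtain k where m: "m = Suc k" using assms by (cases m) auto
  have e1: "cmp (cmp (F (Suc (Suc m)) 0) (S (Suc m) (Suc (Suc m)))) (S m j)
      = cmp (S m (j - 1)) (cmp (F (Suc m) 0) (S m (Suc m)))"
    using I6[OF assms] by (simp add: Msimps)
  have e2: "cmp (cmp (S m (Suc m)) (F (Suc m) 0)) (S m j)
      = cmp (S m (j - 1)) (cmp (S k (Suc k)) (F (Suc k) 0))"
    using I7[of j k] assms unfolding m by (simp add: Msimps)
  have h1: "cmp (S m (j - 1)) (cmp (F (Suc m) 0) (S m (Suc m))) \<in> H m (Suc m)"
    by (rule comp_cl[of _ "M m"]) auto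
  have h2: "cmp (S m (j - 1)) (cmp (S k (Suc k)) (F (Suc k) 0)) \<in> H m (Suc m)"
    by (rule comp_cl[of _ "M m"]) (auto simp: m)
  have "cmp (K (Suc m)) (S m j) = sgnm C (Suc m) (ad (cmp (S m (j - 1)) (cmp (F (Suc m) 0) (S m (Suc m))))
      (ng (cmp (S m (j - 1)) (cmp (S k (Suc k)) (F (Suc k) 0)))))"
    unfolding K_Suc by (simp add: expr_r[where a="Suc m" and b="Suc m" and c=m] e1 e2)
  also have "\<dots> = ng (sgnm C m (ad (cmp (S m (j - 1)) (cmp (F (Suc m) 0) (S m (Suc m))))
      (ng (cmp (S m (j - 1)) (cmp (S k (Suc k)) (F (Suc k) 0))))))"
    by (rule sgnm_Suc[of "M m" "M (Suc m)"], simp, simp, rule ad_cl[OF M_obj M_obj h1 ng_cl[OF M_obj M_obj h2]])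
  also have "\<dots> = ng (cmp (S m (j - 1)) (K m))"
    unfolding m K_Suc by (simp add: expr_l[where a="Suc k" and b="Suc k" and c="Suc (Suc k)"])
  finally show ?thesis .
qed

lemma L3: assumes "1 \<le> i" "i \<le> m"
  shows "cmp (F (Suc m) i) (K (Suc m)) = ng (cmp (K m) (F (Suc m) (Suc i)))"
proof -
  obtain k where m: "m = Suc k" using assms by (cases m) auto
  have e1: "cmp (F (Suc m) i) (cmp (F (Suc (Suc m)) 0) (S (Suc m) (Suc (Suc m))))
      = cmp (cmp (F (Suc m) 0) (S m (Suc m))) (F (Suc m) (Suc i))"
    using I8[OF assms] by (simp add: Msimps)
  have e2: "cmp (F (Suc m) i) (cmp (S m (Suc m)) (F (Suc m) 0))
      = cmp (cmp (S k (Suc k)) (F (Suc k) 0)) (F (Suc m) (Suc i))"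
    using I9[of i k] assms unfolding m by (simp add: Msimps)
  have h1: "cmp (cmp (F (Suc m) 0) (S m (Suc m))) (F (Suc m) (Suc i)) \<in> H (Suc m) m"
    by (rule comp_cl[of _ "M m"]) auto
  have h2: "cmp (cmp (S k (Suc k)) (F (Suc k) 0)) (F (Suc m) (Suc i)) \<in> H (Suc m) m"
    by (rule comp_cl[of _ "M m"]) (auto simp: m)
  have "cmp (F (Suc m) i) (K (Suc m)) = sgnm C (Suc m) (ad (cmp (cmp (F (Suc m) 0) (S m (Suc m))) (F (Suc m) (Suc i)))
      (ng (cmp (cmp (S k (Suc k)) (F (Suc k) 0)) (F (Suc m) (Suc i)))))"
    unfolding K_Suc by (simp add: expr_l[where a="Suc m" and b="Suc m" and c=m] e1 e2)
  also have "\<dots> = ng (sgnm C m (ad (cmp (cmp (F (Suc m) 0) (S m (Suc m))) (F (Suc m) (Suc i)))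
      (ng (cmp (cmp (S k (Suc k)) (F (Suc k) 0)) (F (Suc m) (Suc i))))))"
    by (rule sgnm_Suc[of "M (Suc m)" "M m"], simp, simp, rule ad_cl[OF M_obj M_obj h1 ng_cl[OF M_obj M_obj h2]])
  also have "\<dots> = ng (cmp (K m) (F (Suc m) (Suc i)))"
    unfolding m K_Suc by (simp add: expr_r[where a="Suc k" and b="Suc k" and c="Suc (Suc k)"])
  finally show ?thesis .
qed

lemma L4: "cmp (F (Suc m) (Suc m)) (K (Suc m)) = zr (M (Suc m)) (M m)"
proof -
  have e: "cmp (F (Suc m) (Suc m)) (cmp (F (Suc (Suc m)) 0) (S (Suc m) (Suc (Suc m))))
      = cmp (F (Suc m) (Suc m)) (cmp (S m (Suc m)) (F (Suc m) 0))"
    using I10[of m] by (simp add: Msimps)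
  have h: "cmp (F (Suc m) (Suc m)) (cmp (S m (Suc m)) (F (Suc m) 0)) \<in> H (Suc m) m"
    by (rule comp_cl[of _ "M (Suc m)"]) auto
  show ?thesis unfolding K_Suc
    by (simp add: expr_l[where a="Suc m" and b="Suc m" and c=m] e ng_r[OF M_obj M_obj h] sgnm_zr)
qed

abbreviation "Pw m p \<equiv> mpow C (M m) (K m) p"

lemma Pw_hom[simp]: "Pw m p \<in> H m m" by (rule mpow_hom) simp

lemma KPw_hom[simp]: "cmp (K m) (Pw m p) \<in> H m m" using Pw_hom[of m "Suc p"] by simp

lemma sgnm_ng: "sgnm C p (ng x) = ng (sgnm C p x)" by (simp add: sgnm_def)

lemma Smove: "p \<le> j \<Longrightarrow> j \<le> m \<Longrightarrow> cmp (Pw (Suc m) p) (S m j) = sgnm C p (cmp (S m (j - p)) (Pw m p))"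
proof (induction p)
  case 0
  then show ?case by (simp add: sgnm_def id_l[of "M m" "M (Suc m)"] id_r[of "M m" "M (Suc m)"])
next
  case (Suc p)
  have j1: "1 \<le> j - p" "j - p \<le> m" using Suc.prems by auto
  have jj: "j - p - 1 = j - Suc p" by simp
  have "cmp (Pw (Suc m) (Suc p)) (S m j) = cmp (K (Suc m)) (cmp (Pw (Suc m) p) (S m j))"
    by (simp add: assoc[of "M m" "M (Suc m)" "M (Suc m)" "M (Suc m)"])
  also have "\<dots> = cmp (K (Suc m)) (sgnm C p (cmp (S m (j - p)) (Pw m p)))"
    using Suc by simp
  also have "\<dots> = sgnm C p (cmp (K (Suc m)) (cmp (S m (j - p)) (Pw m p)))"
    by (rule sgnm_comp_r[of "M m" "M (Suc m)" "M (Suc m)"]) (auto intro: comp_cl[of _ "M m"])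
  also have "\<dots> = sgnm C p (cmp (cmp (K (Suc m)) (S m (j - p))) (Pw m p))"
    by (simp add: assoc[of "M m" "M m" "M (Suc m)" "M (Suc m)"])
  also have "\<dots> = sgnm C p (cmp (ng (cmp (S m (j - Suc p)) (K m))) (Pw m p))"
    using L2[OF j1] jj by simp
  also have "\<dots> = sgnm C p (ng (cmp (cmp (S m (j - Suc p)) (K m)) (Pw m p)))"
    by (subst comp_ng_l[of "M m" "M m" "M (Suc m)"]) (auto intro: comp_cl[of _ "M m"])
  also have "\<dots> = sgnm C p (ng (cmp (S m (j - Suc p)) (Pw m (Suc p))))"
    by (simp add: assoc[of "M m" "M m" "M m" "M (Suc m)"])
  also have "\<dots> = sgnm C (Suc p) (cmp (S m (j - Suc p)) (Pw m (Suc p)))"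
  proof -
    have h: "cmp (S m (j - Suc p)) (Pw m (Suc p)) \<in> H m (Suc m)" by (rule comp_cl[of _ "M m"]) auto
    show ?thesis using sgnm_Suc[OF M_obj M_obj h, of p] by (simp add: sgnm_ng)
  qed
  finally show ?case .
qed

lemma S0: "j < p \<Longrightarrow> j \<le> m \<Longrightarrow> cmp (Pw (Suc m) p) (S m j) = zr (M m) (M (Suc m))"
proof (induction p)
  case 0 then show ?case by simp
next
  case (Suc p)
  have "cmp (Pw (Suc m) (Suc p)) (S m j) = cmp (K (Suc m)) (cmp (Pw (Suc m) p) (S m j))"
    by (simp add: assoc[of "M m" "M (Suc m)" "M (Suc m)" "M (Suc m)"])
  also have "\<dots> = zr (M m) (M (Suc m))"
  proof (cases "j < p")
    case True
    then show ?thesis using Suc by (simp add: comp_zr_r)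
  next
    case False
    then have jp: "j = p" using Suc by simp
    have "cmp (K (Suc m)) (cmp (Pw (Suc m) p) (S m j)) = cmp (K (Suc m)) (sgnm C j (cmp (S m 0) (Pw m j)))"
      using Smove[of j j m] Suc jp by simp
    also have "\<dots> = sgnm C j (cmp (K (Suc m)) (cmp (S m 0) (Pw m j)))"
      by (rule sgnm_comp_r[of "M m" "M (Suc m)" "M (Suc m)"]) (auto intro: comp_cl[of _ "M m"])
    also have "\<dots> = sgnm C j (cmp (cmp (K (Suc m)) (S m 0)) (Pw m j))"
      by (simp add: assoc[of "M m" "M m" "M (Suc m)" "M (Suc m)"])
    also have "\<dots> = zr (M m) (M (Suc m))"
      by (simp add: L1 comp_zr_l[of "M m" "M m" "M (Suc m)"] sgnm_zr[of "M m" "M (Suc m)"])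
    finally show ?thesis .
  qed
  finally show ?case .
qed

lemma Fmove: "1 \<le> k \<Longrightarrow> k + p \<le> Suc m \<Longrightarrow>
  cmp (F (Suc m) k) (Pw (Suc m) p) = sgnm C p (cmp (Pw m p) (F (Suc m) (k + p)))"
proof (induction p arbitrary: k)
  case 0
  then show ?case by (simp add: sgnm_def id_l[of "M (Suc m)" "M m"] id_r[of "M (Suc m)" "M m"])
next
  case (Suc p)
  have km: "k \<le> m" using Suc.prems by simp
  have "cmp (F (Suc m) k) (Pw (Suc m) (Suc p)) = cmp (cmp (F (Suc m) k) (K (Suc m))) (Pw (Suc m) p)"
    by (simp add: assoc[of "M (Suc m)" "M (Suc m)" "M (Suc m)" "M m"])
  also have "\<dots> = cmp (ng (cmp (K m) (F (Suc m) (Suc k)))) (Pw (Suc m) p)"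
    using L3[OF Suc.prems(1) km] by simp
  also have "\<dots> = ng (cmp (K m) (cmp (F (Suc m) (Suc k)) (Pw (Suc m) p)))"
    by (simp add: comp_ng_l[of "M (Suc m)" "M (Suc m)" "M m"] comp_cl[of _ "M m"] assoc[of "M (Suc m)" "M (Suc m)" "M m" "M m"])
  also have "\<dots> = ng (cmp (K m) (sgnm C p (cmp (Pw m p) (F (Suc m) (Suc k + p)))))"
    using Suc.IH[of "Suc k"] Suc.prems by simp
  also have "\<dots> = ng (sgnm C p (cmp (Pw m (Suc p)) (F (Suc m) (k + Suc p))))"
    by (simp add: sgnm_comp_r[of "M (Suc m)" "M m" "M m"] comp_cl[of _ "M m"] assoc[of "M (Suc m)" "M m" "M m" "M m"])
  also have "\<dots> = sgnm C (Suc p) (cmp (Pw m (Suc p)) (F (Suc m) (k + Suc p)))"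
  proof -
    have h: "cmp (Pw m (Suc p)) (F (Suc m) (k + Suc p)) \<in> H (Suc m) m" by (rule comp_cl[of _ "M m"]) auto
    show ?thesis using sgnm_Suc[OF M_obj M_obj h, of p] by (simp add: sgnm_ng)
  qed
  finally show ?case .
qed

lemma F0: "1 \<le> k \<Longrightarrow> k \<le> Suc m \<Longrightarrow> 1 \<le> p \<Longrightarrow> Suc m < k + p \<Longrightarrow>
  cmp (F (Suc m) k) (Pw (Suc m) p) = zr (M (Suc m)) (M m)"
proof (induction p arbitrary: k)
  case 0 then show ?case by simp
next
  case (Suc p)
  have "cmp (F (Suc m) k) (Pw (Suc m) (Suc p)) = cmp (cmp (F (Suc m) k) (K (Suc m))) (Pw (Suc m) p)"
    by (simp add: assoc[of "M (Suc m)" "M (Suc m)" "M (Suc m)" "M m"])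
  also have "\<dots> = zr (M (Suc m)) (M m)"
  proof (cases "k = Suc m")
    case True
    then show ?thesis by (simp add: L4 comp_zr_l)
  next
    case False
    then have km: "k \<le> m" using Suc.prems by simp
    have "cmp (cmp (F (Suc m) k) (K (Suc m))) (Pw (Suc m) p) = cmp (ng (cmp (K m) (F (Suc m) (Suc k)))) (Pw (Suc m) p)"
      using L3[OF Suc.prems(1) km] by simp
    also have "\<dots> = ng (cmp (K m) (cmp (F (Suc m) (Suc k)) (Pw (Suc m) p)))"
      by (simp add: comp_ng_l[of "M (Suc m)" "M (Suc m)" "M m"] comp_cl[of _ "M m"] assoc[of "M (Suc m)" "M (Suc m)" "M m" "M m"])
    also have "\<dots> = ng (cmp (K m) (zr (M (Suc m)) (M m)))"
      using Suc.IH[of "Suc k"] Suc.prems km by simp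
    also have "\<dots> = zr (M (Suc m)) (M m)"
      by (simp add: comp_zr_r[of "M (Suc m)" "M m" "M m"] ng_zr[of "M (Suc m)" "M m"])
    finally show ?thesis .
  qed
  finally show ?case .
qed

lemma FS_id: "cmp (F (Suc n) 0) (S n 0) = ident C (M n)"
  by (simp add: F_eq S_eq Mm_comp lam_hom_eps' lam_hom_eta I1 Mm_id)
lemma FS_id1: "cmp (F (Suc n) (Suc 0)) (S n 0) = ident C (M n)"
  by (simp add: F_eq S_eq Mm_comp lam_hom_eps' lam_hom_eta I2[simplified] Mm_id)
lemma FS_id2: "cmp (F (Suc n) (Suc n)) (S n (Suc n)) = ident C (M n)"
  by (simp add: F_eq S_eq Mm_comp lam_hom_eps' lam_hom_eta I4 Mm_id)
lemma FS_swap: "2 \<le> i \<Longrightarrow> i \<le> Suc (Suc q) \<Longrightarrow>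
   cmp (F (Suc (Suc q)) i) (S (Suc q) 0) = cmp (S q 0) (F (Suc q) (i - 1))"
  by (simp add: F_eq S_eq Mm_comp lam_hom_eps' lam_hom_eta I3)

lemma bdry_eq: "bdry C M Mm (Suc n) = hsum C (M (Suc n)) (M n) (\<lambda>i. sgnm C i (F (Suc n) i)) (Suc (Suc n))"
  by (simp add: bdry_def)

lemma partB: "cmp (bdry C M Mm (Suc n)) (cmp (S n 0) (Pw n n)) = zr (M n) (M n)"
proof -
  have g: "cmp (S n 0) (Pw n n) \<in> H n (Suc n)" by (rule comp_cl[of _ "M n"]) auto
  have "cmp (bdry C M Mm (Suc n)) (cmp (S n 0) (Pw n n))
     = hsum C (M n) (M n) (\<lambda>i. cmp (sgnm C i (F (Suc n) i)) (cmp (S n 0) (Pw n n))) (Suc (Suc n))"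
    unfolding bdry_eq by (rule comp_hsum_r[OF M_obj M_obj M_obj _ g]) (simp add: sgnm_cl)
  also have "\<dots> = hsum C (M n) (M n) (\<lambda>i. sgnm C i (cmp (cmp (F (Suc n) i) (S n 0)) (Pw n n))) (Suc (Suc n))"
    by (rule hsum_cong) (simp add: g sgnm_comp_l[of "M n" "M (Suc n)" "M n"] assoc[of "M n" "M n" "M (Suc n)" "M n"])
  also have "\<dots> = ad (sgnm C 0 (cmp (cmp (F (Suc n) 0) (S n 0)) (Pw n n))) (sgnm C 1 (cmp (cmp (F (Suc n) 1) (S n 0)) (Pw n n)))"
  proof (rule hsum_two_first)
    fix i assume i: "2 \<le> i" "i < Suc (Suc n)"
    then obtain q where n: "n = Suc q" by (cases n) auto
    have "cmp (cmp (F (Suc n) i) (S n 0)) (Pw n n) = cmp (cmp (S q 0) (F (Suc q) (i - 1))) (Pw n n)"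
      using FS_swap[of i q] i n by simp
    also have "\<dots> = cmp (S q 0) (cmp (F (Suc q) (i - 1)) (Pw (Suc q) (Suc q)))"
      unfolding n by (rule assoc[symmetric, of "M (Suc q)" "M (Suc q)" "M q" "M (Suc q)"]) auto
    also have "\<dots> = cmp (S q 0) (zr (M (Suc q)) (M q))"
      using F0[of "i - 1" q "Suc q"] i n by simp
    also have "\<dots> = zr (M n) (M n)" unfolding n by (simp add: comp_zr_r)
    finally show "sgnm C i (cmp (cmp (F (Suc n) i) (S n 0)) (Pw n n)) = zr (M n) (M n)"
      by (simp add: sgnm_zr)
  qed (auto simp: sgnm_cl FS_id FS_id1 id_l[of "M n" "M n"])
  also have "\<dots> = zr (M n) (M n)"
    by (simp add: FS_id FS_id1 id_l[of "M n" "M n"] sgnm_def ng_r[of "M n" "M n"])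
  finally show ?thesis .
qed

lemma partC: "cmp (bdry C M Mm (Suc n)) (cmp (Pw (Suc n) n) (S n (Suc n)))
   = ad (cmp (F (Suc n) 0) (cmp (Pw (Suc n) n) (S n (Suc n)))) (ng (sgnm C n (Pw n n)))"
proof -
  have g: "cmp (Pw (Suc n) n) (S n (Suc n)) \<in> H n (Suc n)" by (rule comp_cl[of _ "M (Suc n)"]) auto
  have gk: "\<And>k. cmp (F (Suc n) k) (cmp (Pw (Suc n) n) (S n (Suc n))) \<in> H n n"
    by (rule comp_cl[of _ "M (Suc n)"]) (auto simp: g)
  have fh: "cmp (Pw n n) (F (Suc n) (Suc n)) \<in> H (Suc n) n" by (rule comp_cl[of _ "M n"]) auto
  have c1: "cmp (F (Suc n) (Suc 0)) (cmp (Pw (Suc n) n) (S n (Suc n))) = sgnm C n (Pw n n)"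
  proof -
    have "cmp (F (Suc n) (Suc 0)) (cmp (Pw (Suc n) n) (S n (Suc n)))
        = cmp (cmp (F (Suc n) (Suc 0)) (Pw (Suc n) n)) (S n (Suc n))"
      by (rule assoc[of "M n" "M (Suc n)" "M (Suc n)" "M n"]) auto
    also have "\<dots> = cmp (sgnm C n (cmp (Pw n n) (F (Suc n) (Suc n)))) (S n (Suc n))"
      using Fmove[of 1 n n] by simp
    also have "\<dots> = sgnm C n (cmp (cmp (Pw n n) (F (Suc n) (Suc n))) (S n (Suc n)))"
      by (rule sgnm_comp_l[of "M n" "M (Suc n)" "M n"]) (auto simp: fh)
    also have "\<dots> = sgnm C n (cmp (Pw n n) (cmp (F (Suc n) (Suc n)) (S n (Suc n))))"
      by (simp add: assoc[of "M n" "M (Suc n)" "M n" "M n"])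
    also have "\<dots> = sgnm C n (Pw n n)"
      by (simp add: FS_id2 id_r[of "M n" "M n"])
    finally show ?thesis .
  qed
  have "cmp (bdry C M Mm (Suc n)) (cmp (Pw (Suc n) n) (S n (Suc n)))
     = hsum C (M n) (M n) (\<lambda>i. cmp (sgnm C i (F (Suc n) i)) (cmp (Pw (Suc n) n) (S n (Suc n)))) (Suc (Suc n))"
    unfolding bdry_eq by (rule comp_hsum_r[OF M_obj M_obj M_obj _ g]) (simp add: sgnm_cl)
  also have "\<dots> = hsum C (M n) (M n) (\<lambda>i. sgnm C i (cmp (F (Suc n) i) (cmp (Pw (Suc n) n) (S n (Suc n))))) (Suc (Suc n))"
    by (rule hsum_cong) (simp add: g sgnm_comp_l[of "M n" "M (Suc n)" "M n"])
  also have "\<dots> = ad (sgnm C 0 (cmp (F (Suc n) 0) (cmp (Pw (Suc n) n) (S n (Suc n)))))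
                     (sgnm C 1 (cmp (F (Suc n) 1) (cmp (Pw (Suc n) n) (S n (Suc n)))))"
  proof (rule hsum_two_first)
    fix i assume i: "2 \<le> i" "i < Suc (Suc n)"
    have "cmp (F (Suc n) i) (cmp (Pw (Suc n) n) (S n (Suc n)))
        = cmp (cmp (F (Suc n) i) (Pw (Suc n) n)) (S n (Suc n))"
      by (rule assoc[of "M n" "M (Suc n)" "M (Suc n)" "M n"]) auto
    also have "\<dots> = cmp (zr (M (Suc n)) (M n)) (S n (Suc n))"
      using F0[of i n n] i by simp
    also have "\<dots> = zr (M n) (M n)" by (simp add: comp_zr_l[of "M n" "M (Suc n)" "M n"])
    finally show "sgnm C i (cmp (F (Suc n) i) (cmp (Pw (Suc n) n) (S n (Suc n)))) = zr (M n) (M n)"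
      by (simp add: sgnm_zr)
  qed (auto simp: sgnm_cl gk)
  also have "\<dots> = ad (cmp (F (Suc n) 0) (cmp (Pw (Suc n) n) (S n (Suc n)))) (ng (sgnm C n (Pw n n)))"
    using c1 by (simp add: sgnm_def)
  finally show ?thesis .
qed

lemma grp1: assumes "a \<in> Obj C" "b \<in> Obj C" "x \<in> Hom C a b" "y \<in> Hom C a b"
  shows "ad x (ad y (ng x)) = y"
proof -
  have "ad x (ad y (ng x)) = ad x (ad (ng x) y)" using assms by (simp add: ad_comm[of a b y] ng_cl)
  also have "\<dots> = ad (ad x (ng x)) y" using assms by (simp add: ad_assoc ng_cl)
  also have "\<dots> = y" using assms by (simp add: ng_r zr_l)
  finally show ?thesis .
qed

lemma grp2: assumes "a \<in> Obj C" "b \<in> Obj C" "x \<in> Hom C a b" "y \<in> Hom C a b"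
  shows "ad x (ng (ad y x)) = ng y"
proof -
  have "ad x (ng (ad y x)) = ad x (ad (ng y) (ng x))" using assms by (simp add: ng_ad)
  also have "\<dots> = ng y" using assms by (simp add: grp1 ng_cl)
  finally show ?thesis .
qed

lemma main: "dwyer_kan C M Mm n =
   ad (Pw n n) (ng (cmp (bdry C M Mm (n + 1)) (cmp (Pw (n + 1) n) (dcob C M Mm n))))"
proof -
  let ?K1 = "Pw (Suc n) n" and ?Kn = "Pw n n" and ?b = "bdry C M Mm (Suc n)"
  let ?T0 = "cmp (F (Suc n) 0) (cmp ?K1 (S n (Suc n)))"
  have g1: "cmp ?K1 (S n j) \<in> H n (Suc n)" for j by (rule comp_cl[of _ "M (Suc n)"]) auto
  have hT0: "?T0 \<in> H n n" by (rule comp_cl[of _ "M (Suc n)"]) (auto simp: g1)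
  have A: "cmp ?K1 (dcob C M Mm n) = ad (sgnm C n (cmp ?K1 (S n n))) (sgnm C (Suc n) (cmp ?K1 (S n (Suc n))))"
  proof -
    have "cmp ?K1 (dcob C M Mm n) = hsum C (M n) (M (Suc n)) (\<lambda>i. cmp ?K1 (sgnm C i (S n i))) (Suc (Suc n))"
      unfolding dcob_def Suc_eq_plus1[symmetric] by (rule comp_hsum_l) (auto simp: sgnm_cl)
    also have "\<dots> = hsum C (M n) (M (Suc n)) (\<lambda>i. sgnm C i (cmp ?K1 (S n i))) (Suc (Suc n))"
      by (rule hsum_cong) (simp add: sgnm_comp_r[of "M n" "M (Suc n)" "M (Suc n)"])
    also have "\<dots> = ad (sgnm C n (cmp ?K1 (S n n))) (sgnm C (Suc n) (cmp ?K1 (S n (Suc n))))"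
      by (rule hsum_two_last) (auto simp: S0 sgnm_zr sgnm_cl g1)
    finally show ?thesis .
  qed
  have B: "cmp ?b (sgnm C n (cmp ?K1 (S n n))) = zr (M n) (M n)"
  proof -
    have "cmp ?K1 (S n n) = sgnm C n (cmp (S n 0) ?Kn)" using Smove[of n n n] by simp
    moreover have "cmp (S n 0) ?Kn \<in> H n (Suc n)" by (rule comp_cl[of _ "M n"]) auto
    ultimately show ?thesis
      by (simp add: sgnm_comp_r[of "M n" "M (Suc n)" "M n"] partB sgnm_zr sgnm_cl)
  qed
  have C: "cmp ?b (cmp ?K1 (dcob C M Mm n)) =
      ad (zr (M n) (M n)) (sgnm C (Suc n) (ad ?T0 (ng (sgnm C n ?Kn))))"
    unfolding A
    by (simp add: dl[of "M n" "M (Suc n)" "M n"] sgnm_cl g1 B sgnm_comp_r[of "M n" "M (Suc n)" "M n"] partC)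
  have DK: "dwyer_kan C M Mm n = sgnm C n ?T0" by (simp add: dwyer_kan_def)
  have hR: "ad ?T0 (ng (sgnm C n ?Kn)) \<in> H n n" by (simp add: ad_cl ng_cl sgnm_cl hT0)
  show ?thesis
  proof (cases "even n")
    case True
    then show ?thesis unfolding DK using C hR hT0
      by (simp add: sgnm_def zr_l[of "M n" "M n"] ng_cl ng_ng[of "M n" "M n"] grp1[of "M n" "M n"])
  next
    case False
    then show ?thesis unfolding DK using C hR hT0
      by (simp add: sgnm_def zr_l ng_ng[of "M n" "M n"] ng_zr grp2[of "M n" "M n"] ad_cl ng_cl)
  qed
qed

end

theorem mainTheorem14:
  fixes C :: "('o, 'm) preadd_cat" and M :: "nat \<Rightarrow> 'o"
    and Mm :: "nat \<Rightarrow> nat \<Rightarrow> (int \<Rightarrow> int) \<Rightarrow> 'm" and n :: nat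
  assumes "preadditive C" and "duplicial C M Mm"
  shows "dwyer_kan C M Mm n =
           add C (mpow C (M n) (karoubi C M Mm n) n)
                 (neg C (comp C (bdry C M Mm (n + 1))
                     (comp C (mpow C (M (n + 1)) (karoubi C M Mm (n + 1)) n) (dcob C M Mm n))))"
proof -
  interpret dupl C M Mm by (rule dupl.intro[OF assms])
  show ?thesis by (rule main)
qed

end
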